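(* Let $f:\{0,1\}^n\to\{0,1\}$ be a Boolean function and $0<\epsilon<1$. Then $\operatorname{rdeg}_\epsilon(f)\le2\max\{\mathsf N_\epsilon(f),\mathsf N_\epsilon(\overline f)\}$.
   Context: $\mathsf N_\epsilon(f)$ is the minimum degree of a real polynomial $p$ with $|p(x)|\le\epsilon$ whenever $f(x)=0$ and $|p(x)|\ge1$ whenever $f(x)=1$; $\overline f=1-f$. The approximate rational degree $\operatorname{rdeg}_\epsilon(f)$ is the minimum of $\max\{\deg p,\deg q\}$ over real polynomials $p,q$ such that $q(x)\neq 0$ and $|f(x)-p(x)/q(x)|\le\epsilon$ for all $x\in\{0,1\}^n$. *)

theory Defs
  imports Complex_Main
begin

text \<open>Points of the Boolean cube {0,1}^n, represented as real vectors
  nat => real that are 0/1 on coordinates below n and 0 elsewhere.\<close>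
definition cube :: "nat \<Rightarrow> (nat \<Rightarrow> real) set" where
  "cube n = {x. (\<forall>i<n. x i \<in> {0, 1}) \<and> (\<forall>i\<ge>n. x i = 0)}"

text \<open>p is (the evaluation function of) a real polynomial in the n variables
  x 0, ..., x (n-1) of total degree at most d: a finite linear combination
  of monomials prod_i x_i^(alpha_i) with sum_i alpha_i <= d.\<close>
definition poly_deg_le :: "nat \<Rightarrow> nat \<Rightarrow> ((nat \<Rightarrow> real) \<Rightarrow> real) \<Rightarrow> bool" where
  "poly_deg_le n d p \<longleftrightarrow>
     (\<exists>(A :: (nat \<Rightarrow> nat) set) (c :: (nat \<Rightarrow> nat) \<Rightarrow> real).
        finite A \<and>
        (\<forall>\<alpha>\<in>A. (\<forall>i\<ge>n. \<alpha> i = 0) \<and> (\<Sum>i<n. \<alpha> i) \<le> d) \<and>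
        (\<forall>x. p x = (\<Sum>\<alpha>\<in>A. c \<alpha> * (\<Prod>i<n. x i ^ \<alpha> i))))"

definition Ndeg :: "nat \<Rightarrow> real \<Rightarrow> ((nat \<Rightarrow> real) \<Rightarrow> real) \<Rightarrow> nat" where
  "Ndeg n \<epsilon> f = (LEAST d. \<exists>p. poly_deg_le n d p \<and>
      (\<forall>x\<in>cube n. (f x = 0 \<longrightarrow> \<bar>p x\<bar> \<le> \<epsilon>) \<and> (f x = 1 \<longrightarrow> \<bar>p x\<bar> \<ge> 1)))"

text \<open>Approximate rational degree: minimum of max(deg p, deg q) over p, q with
  q nonzero on the cube and |f x - p x / q x| <= eps on the cube.
  (max(deg p, deg q) <= d iff both degrees are <= d.)\<close>
definition rdeg :: "nat \<Rightarrow> real \<Rightarrow> ((nat \<Rightarrow> real) \<Rightarrow> real) \<Rightarrow> nat" where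
  "rdeg n \<epsilon> f = (LEAST d. \<exists>p q. poly_deg_le n d p \<and> poly_deg_le n d q \<and>
      (\<forall>x\<in>cube n. q x \<noteq> 0 \<and> \<bar>f x - p x / q x\<bar> \<le> \<epsilon>))"

end

theory Submission
  imports Defs
begin

lemma pdl_mono: "poly_deg_le n d p \<Longrightarrow> d \<le> d' \<Longrightarrow> poly_deg_le n d' p"
  unfolding poly_deg_le_def by (meson order_trans)

lemma pdl_const: "poly_deg_le n 0 (\<lambda>x. k)"
  unfolding poly_deg_le_def
  by (rule exI[of _ "{\<lambda>_. 0}"], rule exI[of _ "\<lambda>_. k"]) simp

lemma pdl_var: assumes "j < n" shows "poly_deg_le n 1 (\<lambda>x. x j)"
proof -
  have "\<And>x::nat\<Rightarrow>real. (\<Prod>i<n. x i ^ (if i = j then 1 else 0)) = x j"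
  proof -
    fix x :: "nat \<Rightarrow> real"
    have "(\<Prod>i<n. x i ^ (if i = j then 1 else 0)) = (\<Prod>i<n. if i = j then x i else 1)"
      by (rule prod.cong) auto
    also have "\<dots> = x j" using assms by (simp add: prod.delta)
    finally show "(\<Prod>i<n. x i ^ (if i = j then 1 else 0)) = x j" .
  qed
  moreover have "(\<Sum>i<n. (if i = j then 1 else 0::nat)) = 1" using assms by (simp add: sum.delta)
  ultimately show ?thesis
    unfolding poly_deg_le_def
    by (intro exI[of _ "{\<lambda>i. if i = j then 1 else 0}"] exI[of _ "\<lambda>_. 1"]) (use assms in auto)
qed

lemma pdl_add:
  assumes "poly_deg_le n d p" "poly_deg_le n d q"
  shows "poly_deg_le n d (\<lambda>x. p x + q x)"
proof -
  obtain A c where A: "finite A" "\<forall>\<alpha>\<in>A. (\<forall>i\<ge>n. \<alpha> i = 0) \<and> (\<Sum>i<n. \<alpha> i) \<le> d"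
    "\<forall>x. p x = (\<Sum>\<alpha>\<in>A. c \<alpha> * (\<Prod>i<n. x i ^ \<alpha> i))"
    using assms(1) unfolding poly_deg_le_def by blast
  obtain B e where B: "finite B" "\<forall>\<alpha>\<in>B. (\<forall>i\<ge>n. \<alpha> i = 0) \<and> (\<Sum>i<n. \<alpha> i) \<le> d"
    "\<forall>x. q x = (\<Sum>\<alpha>\<in>B. e \<alpha> * (\<Prod>i<n. x i ^ \<alpha> i))"
    using assms(2) unfolding poly_deg_le_def by blast
  define k where "k \<alpha> = (if \<alpha> \<in> A then c \<alpha> else 0) + (if \<alpha> \<in> B then e \<alpha> else 0)" for \<alpha>
  have "p x + q x = (\<Sum>\<alpha>\<in>A \<union> B. k \<alpha> * (\<Prod>i<n. x i ^ \<alpha> i))" for x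
  proof -
    have e1: "(\<Sum>\<alpha>\<in>A \<union> B. (if \<alpha> \<in> A then c \<alpha> * (\<Prod>i<n. x i ^ \<alpha> i) else 0))
        = (\<Sum>\<alpha>\<in>A. c \<alpha> * (\<Prod>i<n. x i ^ \<alpha> i))"
      using sum.inter_restrict[of "A \<union> B" "\<lambda>\<alpha>. c \<alpha> * (\<Prod>i<n. x i ^ \<alpha> i)" A] A(1) B(1)
      by (simp add: Int_absorb1)
    have e2: "(\<Sum>\<alpha>\<in>A \<union> B. (if \<alpha> \<in> B then e \<alpha> * (\<Prod>i<n. x i ^ \<alpha> i) else 0))
        = (\<Sum>\<alpha>\<in>B. e \<alpha> * (\<Prod>i<n. x i ^ \<alpha> i))"
      using sum.inter_restrict[of "A \<union> B" "\<lambda>\<alpha>. e \<alpha> * (\<Prod>i<n. x i ^ \<alpha> i)" B] A(1) B(1)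
      by (simp add: Int_absorb1)
    have "(\<Sum>\<alpha>\<in>A \<union> B. k \<alpha> * (\<Prod>i<n. x i ^ \<alpha> i)) =
       (\<Sum>\<alpha>\<in>A \<union> B. (if \<alpha> \<in> A then c \<alpha> * (\<Prod>i<n. x i ^ \<alpha> i) else 0) +
          (if \<alpha> \<in> B then e \<alpha> * (\<Prod>i<n. x i ^ \<alpha> i) else 0))"
      by (rule sum.cong) (auto simp: k_def algebra_simps)
    also have "\<dots> = p x + q x" unfolding sum.distrib e1 e2 using A(3) B(3) by simp
    finally show ?thesis by simp
  qed
  then show ?thesis unfolding poly_deg_le_def using A(1,2) B(1,2)
    by (intro exI[of _ "A \<union> B"] exI[of _ k]) auto
qed

lemma pdl_mult:
  assumes "poly_deg_le n d1 p" "poly_deg_le n d2 q"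
  shows "poly_deg_le n (d1 + d2) (\<lambda>x. p x * q x)"
proof -
  obtain A c where A: "finite A" "\<forall>\<alpha>\<in>A. (\<forall>i\<ge>n. \<alpha> i = 0) \<and> (\<Sum>i<n. \<alpha> i) \<le> d1"
    "\<forall>x. p x = (\<Sum>\<alpha>\<in>A. c \<alpha> * (\<Prod>i<n. x i ^ \<alpha> i))"
    using assms(1) unfolding poly_deg_le_def by blast
  obtain B e where B: "finite B" "\<forall>\<alpha>\<in>B. (\<forall>i\<ge>n. \<alpha> i = 0) \<and> (\<Sum>i<n. \<alpha> i) \<le> d2"
    "\<forall>x. q x = (\<Sum>\<alpha>\<in>B. e \<alpha> * (\<Prod>i<n. x i ^ \<alpha> i))"
    using assms(2) unfolding poly_deg_le_def by blast
  define g :: "(nat \<Rightarrow> nat) \<times> (nat \<Rightarrow> nat) \<Rightarrow> (nat \<Rightarrow> nat)"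
    where "g ab = (\<lambda>i. fst ab i + snd ab i)" for ab
  define C where "C = g ` (A \<times> B)"
  define h where "h ab = c (fst ab) * e (snd ab)" for ab
  define k where "k \<gamma> = (\<Sum>ab\<in>{ab \<in> A \<times> B. g ab = \<gamma>}. h ab)" for \<gamma>
  define m where "m \<alpha> x = (\<Prod>i<n. x i ^ \<alpha> i)" for \<alpha> and x :: "nat \<Rightarrow> real"
  have fAB: "finite (A \<times> B)" using A(1) B(1) by simp
  have mg: "m (g ab) x = m (fst ab) x * m (snd ab) x" for ab x
    unfolding m_def g_def by (simp add: power_add prod.distrib)
  have "p x * q x = (\<Sum>\<gamma>\<in>C. k \<gamma> * m \<gamma> x)" for x
  proof -
    have "p x * q x = (\<Sum>a\<in>A. \<Sum>b\<in>B. (c a * m a x) * (e b * m b x))"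
      using A(3) B(3) unfolding m_def by (simp add: sum_product)
    also have "\<dots> = (\<Sum>ab\<in>A \<times> B. h ab * m (g ab) x)"
      unfolding sum.cartesian_product mg h_def by (rule sum.cong) (auto simp: algebra_simps)
    also have "\<dots> = (\<Sum>\<gamma>\<in>C. \<Sum>ab\<in>{ab \<in> A \<times> B. g ab = \<gamma>}. h ab * m (g ab) x)"
      by (rule sum.group[symmetric]) (use fAB in \<open>auto simp: C_def\<close>)
    also have "\<dots> = (\<Sum>\<gamma>\<in>C. \<Sum>ab\<in>{ab \<in> A \<times> B. g ab = \<gamma>}. h ab * m \<gamma> x)"
      by (intro sum.cong refl) auto
    also have "\<dots> = (\<Sum>\<gamma>\<in>C. k \<gamma> * m \<gamma> x)"
      unfolding k_def by (simp add: sum_distrib_right)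
    finally show ?thesis .
  qed
  moreover have "finite C" using fAB by (simp add: C_def)
  moreover have "\<forall>\<gamma>\<in>C. (\<forall>i\<ge>n. \<gamma> i = 0) \<and> (\<Sum>i<n. \<gamma> i) \<le> d1 + d2"
  proof
    fix \<gamma> assume "\<gamma> \<in> C"
    then obtain a b where ab: "a \<in> A" "b \<in> B" "\<gamma> = g (a, b)" by (auto simp: C_def)
    have "(\<Sum>i<n. \<gamma> i) = (\<Sum>i<n. a i) + (\<Sum>i<n. b i)" by (simp add: ab g_def sum.distrib)
    then show "(\<forall>i\<ge>n. \<gamma> i = 0) \<and> (\<Sum>i<n. \<gamma> i) \<le> d1 + d2"
      using A(2) B(2) ab by (auto simp: g_def intro: add_mono)
  qed
  ultimately show ?thesis unfolding poly_deg_le_def m_def by blast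
qed

lemma pdl_sum:
  assumes "finite S" "\<And>y. y \<in> S \<Longrightarrow> poly_deg_le n d (P y)"
  shows "poly_deg_le n d (\<lambda>x. \<Sum>y\<in>S. P y x)"
  using assms
proof (induction S rule: finite_induct)
  case empty
  then show ?case using pdl_mono[OF pdl_const[of n 0]] by simp
next
  case (insert a F)
  then show ?case using pdl_add[of n d "P a" "\<lambda>x. \<Sum>y\<in>F. P y x"] by simp
qed

lemma pdl_prod:
  assumes "\<And>i. i < k \<Longrightarrow> poly_deg_le n 1 (P i)"
  shows "poly_deg_le n k (\<lambda>x. \<Prod>i<k. P i x)"
  using assms
proof (induction k)
  case 0
  then show ?case using pdl_const[of n 1] by simp
next
  case (Suc k)
  then show ?case using pdl_mult[of n k "\<lambda>x. \<Prod>i<k. P i x" 1 "P k"] by simp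
qed

lemma finite_cube: "finite (cube n)"
proof -
  define G where "G S = (\<lambda>i. if i \<in> S then 1 else (0::real))" for S :: "nat set"
  have "cube n \<subseteq> G ` Pow {..<n}"
  proof
    fix x assume x: "x \<in> cube n"
    have "x = G {i. i < n \<and> x i = 1}"
    proof
      fix i show "x i = G {i. i < n \<and> x i = 1} i"
        using x by (cases "i < n") (auto simp: cube_def G_def)
    qed
    then show "x \<in> G ` Pow {..<n}" by blast
  qed
  then show ?thesis by (rule finite_subset) simp
qed

lemma interp_exists:
  fixes g :: "(nat \<Rightarrow> real) \<Rightarrow> real"
  shows "\<exists>p. poly_deg_le n n p \<and> (\<forall>x\<in>cube n. p x = (if g x = 1 then 1 else 0))"
proof -
  define L where "L y x = (\<Prod>i<n. (1 - y i) + (2 * y i - 1) * x i)" for y x :: "nat \<Rightarrow> real"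
  define S where "S = {y \<in> cube n. g y = 1}"
  have Lpoly: "poly_deg_le n n (L y)" for y
    unfolding L_def
  proof (rule pdl_prod)
    fix i assume "i < n"
    have "poly_deg_le n (0 + 1) (\<lambda>x. (2 * y i - 1) * x i)"
      by (rule pdl_mult[OF pdl_const pdl_var[OF \<open>i < n\<close>]])
    then show "poly_deg_le n 1 (\<lambda>x. (1 - y i) + (2 * y i - 1) * x i)"
      using pdl_add[OF pdl_mono[OF pdl_const[of n "1 - y i"]]] by simp
  qed
  have Lval: "L y x = (if x = y then 1 else 0)" if "x \<in> cube n" "y \<in> cube n" for x y
  proof (cases "x = y")
    case True
    have "L y x = (\<Prod>i<n. (1::real))" unfolding L_def
      by (rule prod.cong) (use that True in \<open>auto simp: cube_def\<close>)
    then show ?thesis using True by simp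
  next
    case False
    then obtain i where i: "x i \<noteq> y i" by auto
    with that have "i < n" by (cases "i < n") (auto simp: cube_def)
    moreover have "(1 - y i) + (2 * y i - 1) * x i = 0"
    proof -
      have "x i = 0 \<or> x i = 1" "y i = 0 \<or> y i = 1" using that \<open>i < n\<close> by (auto simp: cube_def)
      then show ?thesis using i by auto
    qed
    ultimately have "L y x = 0" unfolding L_def by (intro prod_zero) auto
    then show ?thesis using False by simp
  qed
  have fS: "finite S" using finite_cube by (simp add: S_def)
  have "poly_deg_le n n (\<lambda>x. \<Sum>y\<in>S. L y x)" by (rule pdl_sum[OF fS Lpoly])
  moreover have "(\<Sum>y\<in>S. L y x) = (if g x = 1 then 1 else 0)" if "x \<in> cube n" for x
  proof -
    have "(\<Sum>y\<in>S. L y x) = (\<Sum>y\<in>S. if x = y then 1 else 0)"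
      by (rule sum.cong) (use that Lval in \<open>auto simp: S_def\<close>)
    also have "\<dots> = (if x \<in> S then 1 else 0)" using fS by (simp add: sum.delta)
    finally show ?thesis using that by (simp add: S_def)
  qed
  ultimately show ?thesis by blast
qed

lemma Ndeg_ex:
  assumes "0 < \<epsilon>"
  shows "\<exists>p. poly_deg_le n (Ndeg n \<epsilon> g) p \<and>
      (\<forall>x\<in>cube n. (g x = 0 \<longrightarrow> \<bar>p x\<bar> \<le> \<epsilon>) \<and> (g x = 1 \<longrightarrow> \<bar>p x\<bar> \<ge> 1))"
proof -
  obtain p where p: "poly_deg_le n n p" "\<forall>x\<in>cube n. p x = (if g x = 1 then 1 else 0)"
    using interp_exists by blast
  have "\<exists>d p. poly_deg_le n d p \<and>
      (\<forall>x\<in>cube n. (g x = 0 \<longrightarrow> \<bar>p x\<bar> \<le> \<epsilon>) \<and> (g x = 1 \<longrightarrow> \<bar>p x\<bar> \<ge> 1))"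
    using p assms by (intro exI[of _ n] exI[of _ p]) auto
  then show ?thesis unfolding Ndeg_def by (rule LeastI_ex)
qed

lemma one_minus_frac: "(0::real) < a + b \<Longrightarrow> 1 - a / (a + b) = b / (a + b)"
proof -
  assume h: "(0::real) < a + b"
  have "1 - a / (a + b) = (a + b) / (a + b) - a / (a + b)" using h by simp
  also have "\<dots> = ((a + b) - a) / (a + b)" by (rule diff_divide_distrib[symmetric])
  also have "\<dots> = b / (a + b)" by simp
  finally show ?thesis .
qed

theorem lemma3p5:
  fixes n :: nat and \<epsilon> :: real and f :: "(nat \<Rightarrow> real) \<Rightarrow> real"
  assumes "\<forall>x\<in>cube n. f x \<in> {0, 1}"
    and "0 < \<epsilon>" and "\<epsilon> < 1"
  shows "rdeg n \<epsilon> f \<le> 2 * max (Ndeg n \<epsilon> f) (Ndeg n \<epsilon> (\<lambda>x. 1 - f x))"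
proof -
  define D where "D = max (Ndeg n \<epsilon> f) (Ndeg n \<epsilon> (\<lambda>x. 1 - f x))"
  obtain p where p: "poly_deg_le n (Ndeg n \<epsilon> f) p"
    "\<forall>x\<in>cube n. (f x = 0 \<longrightarrow> \<bar>p x\<bar> \<le> \<epsilon>) \<and> (f x = 1 \<longrightarrow> \<bar>p x\<bar> \<ge> 1)"
    using Ndeg_ex[OF assms(2)] by blast
  obtain q where q: "poly_deg_le n (Ndeg n \<epsilon> (\<lambda>x. 1 - f x)) q"
    "\<forall>x\<in>cube n. (1 - f x = 0 \<longrightarrow> \<bar>q x\<bar> \<le> \<epsilon>) \<and> (1 - f x = 1 \<longrightarrow> \<bar>q x\<bar> \<ge> 1)"
    using Ndeg_ex[OF assms(2)] by blast
  have pD: "poly_deg_le n D p" using pdl_mono[OF p(1)] by (simp add: D_def)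
  have qD: "poly_deg_le n D q" using pdl_mono[OF q(1)] by (simp add: D_def)
  have P: "poly_deg_le n (2 * D) (\<lambda>x. p x * p x)" using pdl_mult[OF pD pD] by (simp add: mult_2)
  have Q: "poly_deg_le n (2 * D) (\<lambda>x. p x * p x + q x * q x)"
    using pdl_add[OF P] pdl_mult[OF qD qD] by (simp add: mult_2)
  have good: "p x * p x + q x * q x \<noteq> 0 \<and>
      \<bar>f x - p x * p x / (p x * p x + q x * q x)\<bar> \<le> \<epsilon>" if x: "x \<in> cube n" for x
  proof -
    have ee: "\<epsilon> * \<epsilon> \<le> \<epsilon>" using assms(2,3) by (simp add: mult_le_cancel_left1)
    have p2: "0 \<le> p x * p x" and q2: "0 \<le> q x * q x" by simp_all
    consider "f x = 0" | "f x = 1" using assms(1) x by auto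
    then show ?thesis
    proof cases
      case 1
      then have a: "\<bar>p x\<bar> \<le> \<epsilon>" and b: "1 \<le> \<bar>q x\<bar>" using p(2) q(2) x by auto
      have b2: "1 \<le> q x * q x"
      proof -
        have "1*1 \<le> \<bar>q x\<bar> * \<bar>q x\<bar>" by (rule mult_mono[OF b b]) auto
        then show ?thesis by (simp add: abs_mult_self_eq)
      qed
      have a2: "p x * p x \<le> \<epsilon> * \<epsilon>"
      proof -
        have "\<bar>p x\<bar> * \<bar>p x\<bar> \<le> \<epsilon> * \<epsilon>" by (rule mult_mono[OF a a]) (use assms(2) in auto)
        then show ?thesis by (simp add: abs_mult_self_eq)
      qed
      have "p x * p x / (p x * p x + q x * q x) \<le> p x * p x"
        proof -
        have "p x * p x * 1 \<le> p x * p x * (p x * p x + q x * q x)"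
          using p2 q2 b2 by (intro mult_left_mono) linarith+
        moreover have "0 < p x * p x + q x * q x" using p2 b2 by linarith
        ultimately show ?thesis by (subst pos_divide_le_eq) auto
      qed
      moreover have "0 \<le> p x * p x / (p x * p x + q x * q x)" using p2 q2 by simp
      ultimately show ?thesis using 1 a2 ee b2 p2 by auto
    next
      case 2
      then have a: "1 \<le> \<bar>p x\<bar>" and b: "\<bar>q x\<bar> \<le> \<epsilon>" using p(2) q(2) x by auto
      have a2: "1 \<le> p x * p x"
      proof -
        have "1*1 \<le> \<bar>p x\<bar> * \<bar>p x\<bar>" by (rule mult_mono[OF a a]) auto
        then show ?thesis by (simp add: abs_mult_self_eq)
      qed
      have b2: "q x * q x \<le> \<epsilon> * \<epsilon>"
      proof -
        have "\<bar>q x\<bar> * \<bar>q x\<bar> \<le> \<epsilon> * \<epsilon>" by (rule mult_mono[OF b b]) (use assms(2) in auto)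
        then show ?thesis by (simp add: abs_mult_self_eq)
      qed
      have ne: "p x * p x + q x * q x > 0" using a2 q2 by linarith
      have "f x - p x * p x / (p x * p x + q x * q x) = q x * q x / (p x * p x + q x * q x)"
        using ne 2 one_minus_frac[of "p x * p x" "q x * q x"] by simp
      moreover have "q x * q x / (p x * p x + q x * q x) \<le> q x * q x"
        proof -
        have "q x * q x * 1 \<le> q x * q x * (p x * p x + q x * q x)"
          using p2 q2 a2 by (intro mult_left_mono) linarith+
        moreover have "0 < p x * p x + q x * q x" using q2 a2 by linarith
        ultimately show ?thesis by (subst pos_divide_le_eq) auto
      qed
      moreover have "0 \<le> q x * q x / (p x * p x + q x * q x)" using p2 q2 by simp
      ultimately show ?thesis using ne b2 ee by auto
    qed
  qed
  have "rdeg n \<epsilon> f \<le> 2 * D" unfolding rdeg_def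
    by (rule Least_le) (use P Q good in blast)
  then show ?thesis by (simp add: D_def)
qed

end
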